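(* For non-negative integers $n,p$ define \begin{multline*} g(n,p)=\frac{4p^2+6p+2}{n+2p+2}+4p+(4p^2+4np+4n+10p+6)2^{1-n}+2^{-2p}\\ +2^{-n-2p}\sum_{i=1}^{p+1} i\Big\{2\binom{n+2p+4}{n+2i+1}-\binom{n+2p+4}{n+2i+2}-(2n+4p+6)\binom{2p+4}{2i+1}\Big\}\\ +2^{2-n}\sum_{i=1}^{p+1}\sum_{k=2i-1}^{2p+1} i\,2^{-k}\Big\{\frac{n+2p+1}{n+2p+2}\binom{n+k+2}{n+2i+1}-\binom{n+k+2}{n+2i}+\binom{k+3}{2i+1}\Big\}\\ +2^{-2p}\sum_{i=1}^{p+1}\sum_{k=1}^{n} i\,2^{-k}\Big\{\binom{k+2p+4}{k+2i+2}-\frac{2n+4p+6}{n+2p+2}\binom{k+2p+3}{k+2i+1}\Big\}. \end{multline*} Then $g(n,p)=0$ for all integers $n,p\ge0$.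
   Context: $\binom{a}{b}=\frac{a!}{b!(a-b)!}$ for integers $0\le b\le a$. A sum with no terms equals $0$. *)

theory Defs
  imports Complex_Main
begin

definition g :: "nat \<Rightarrow> nat \<Rightarrow> real" where
  "g n p =
     (4 * real p ^ 2 + 6 * real p + 2) / (real n + 2 * real p + 2)
   + 4 * real p
   + (4 * real p ^ 2 + 4 * real n * real p + 4 * real n + 10 * real p + 6) * (2::real) powi (1 - int n)
   + (2::real) powi (- 2 * int p)
   + (2::real) powi (- int n - 2 * int p) *
       (\<Sum>i=1..p+1. real i *
          (2 * real ((n + 2*p + 4) choose (n + 2*i + 1))
           - real ((n + 2*p + 4) choose (n + 2*i + 2))
           - (2 * real n + 4 * real p + 6) * real ((2*p + 4) choose (2*i + 1))))
   + (2::real) powi (2 - int n) *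
       (\<Sum>i=1..p+1. \<Sum>k=2*i-1..2*p+1. real i * (2::real) powi (- int k) *
          ((real n + 2 * real p + 1) / (real n + 2 * real p + 2) * real ((n + k + 2) choose (n + 2*i + 1))
           - real ((n + k + 2) choose (n + 2*i))
           + real ((k + 3) choose (2*i + 1))))
   + (2::real) powi (- 2 * int p) *
       (\<Sum>i=1..p+1. \<Sum>k=1..n. real i * (2::real) powi (- int k) *
          (real ((k + 2*p + 4) choose (k + 2*i + 2))
           - (2 * real n + 4 * real p + 6) / (real n + 2 * real p + 2) * real ((k + 2*p + 3) choose (k + 2*i + 1))))"

end

theory Submission
  imports Defs
begin
definition Tr :: "nat \<Rightarrow> nat \<Rightarrow> real" where
  "Tr M r = (\<Sum>j=r..M. real (M choose j))"

lemma Tr_top: "M < r \<Longrightarrow> Tr M r = 0"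
  unfolding Tr_def by simp

lemma Tr_step: "Tr M r = real (M choose r) + Tr M (Suc r)"
proof (cases "r \<le> M")
  case True
  then show ?thesis unfolding Tr_def by (simp add: sum.atLeast_Suc_atMost)
next
  case False
  then show ?thesis by (simp add: Tr_top)
qed

lemma Tr_0: "Tr M 0 = 2^M"
  unfolding Tr_def using choose_row_sum[of M]
  by (metis atMost_atLeast0 of_nat_numeral of_nat_power of_nat_sum)

lemma Tr_same: "Tr M M = 1"
  using Tr_step[of M M] by (simp add: Tr_top)

lemma sum_ext_top: "(\<Sum>j=a..Suc M. real (M choose j)) = (\<Sum>j=a..M. real (M choose j))"
proof (cases "a \<le> Suc M")
  case True
  then show ?thesis by (simp add: sum.cl_ivl_Suc)
next
  case False
  then show ?thesis by simp
qed

lemma Tr_pascal: "Tr (Suc M) (Suc r) = Tr M (Suc r) + Tr M r"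
proof -
  have "Tr (Suc M) (Suc r) = (\<Sum>j=r..M. real (Suc M choose Suc j))"
    unfolding Tr_def by (simp only: sum.shift_bounds_cl_Suc_ivl o_def)
  also have "\<dots> = (\<Sum>j=r..M. real (M choose j)) + (\<Sum>j=r..M. real (M choose Suc j))"
    by (simp only: binomial_Suc_Suc of_nat_add sum.distrib)
  also have "(\<Sum>j=r..M. real (M choose Suc j)) = (\<Sum>j=Suc r..Suc M. real (M choose j))"
    by (simp only: sum.shift_bounds_cl_Suc_ivl o_def)
  also have "\<dots> = Tr M (Suc r)" unfolding Tr_def by (rule sum_ext_top)
  finally show ?thesis unfolding Tr_def by simp
qed

lemma Tr_pascal2: "Tr (Suc (Suc M)) (Suc (Suc r)) = Tr M (Suc (Suc r)) + 2 * Tr M (Suc r) + Tr M r"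
  by (simp add: Tr_pascal)

lemma Tr_sym: "r \<le> Suc M \<Longrightarrow> Tr M r + Tr M (Suc M - r) = 2^M"
proof (induction r)
  case 0
  then show ?case by (simp add: Tr_0 Tr_top)
next
  case (Suc r)
  have h1: "Tr M r = real (M choose r) + Tr M (Suc r)" by (rule Tr_step)
  have h2: "Tr M (M - r) = real (M choose (M - r)) + Tr M (Suc M - r)"
    using Tr_step[of M "M - r"] Suc.prems by (simp add: Suc_diff_le)
  have h3: "M choose (M - r) = M choose r"
    using Suc.prems by (simp add: binomial_symmetric[symmetric])
  have "Tr M r + Tr M (Suc M - r) = 2^M" using Suc by simp
  then show ?case using h1 h2 h3 Suc.prems by simp
qed

lemma tele: "(\<Sum>k\<in>{a..<a+d}. real ((c+k) choose r) / 2^k)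
   = 2 * Tr (c+a+d) (Suc r) / 2^(a+d) - 2 * Tr (c+a) (Suc r) / 2^a"
proof (induction d)
  case 0
  then show ?case by simp
next
  case (Suc d)
  have e1: "Tr (c+a+Suc d) (Suc r) = 2 * Tr (c+a+d) (Suc r) + real ((c+a+d) choose r)"
    using Tr_pascal[of "c+a+d" r] Tr_step[of "c+a+d" r] by simp
  have e2: "2 * Tr (c+a+Suc d) (Suc r) / 2^(a+Suc d) = 2 * Tr (c+a+d) (Suc r) / 2^(a+d) + real ((c+a+d) choose r) / 2^(a+d)"
    unfolding e1 by (simp add: field_simps)
  have "(\<Sum>k\<in>{a..<a+Suc d}. real ((c+k) choose r) / 2^k) = (\<Sum>k\<in>{a..<a+d}. real ((c+k) choose r) / 2^k) + real ((c+(a+d)) choose r) / 2^(a+d)"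
    by simp
  then show ?case using Suc.IH e2 by (simp add: add.assoc)
qed

lemma pw: "(2::real) powi (- int k) = 1/2^k"
  by (simp add: power_int_minus inverse_eq_divide)

lemma c43: "(4::nat) choose 3 = 4"
  by (simp add: numeral_eq_Suc)

lemma Tr_1: "Tr M 1 = 2^M - 1"
  using Tr_step[of M 0] by (simp add: Tr_0)
lemma Tr_2: "Tr M 2 = 2^M - 1 - real M"
  using Tr_step[of M 1] Tr_1[of M] by (simp add: numeral_2_eq_2)

lemma Tr_p2a: "Tr (Suc (Suc M)) (2*j+3) = Tr M (2*j+3) + 2 * Tr M (2*j+2) + Tr M (2*j+1)"
  using Tr_pascal2[of M "2*j+1"] by (simp add: eval_nat_numeral)
lemma Tr_p2b: "Tr (Suc (Suc M)) (2*j+4) = Tr M (2*j+4) + 2 * Tr M (2*j+3) + Tr M (2*j+2)"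
  using Tr_pascal2[of M "2*j+2"] by (simp add: eval_nat_numeral)

definition X1 :: "nat \<Rightarrow> real" where "X1 p = (\<Sum>j\<le>p. real (j+1) * Tr (2*p+4) (2*j+3))"
definition X2 :: "nat \<Rightarrow> real" where "X2 p = (\<Sum>j\<le>p. real (j+1) * Tr (2*p+4) (2*j+4))"
definition Y1 :: "nat \<Rightarrow> real" where "Y1 p = (\<Sum>j\<le>p. Tr (2*p+4) (2*j+3))"
definition Y2 :: "nat \<Rightarrow> real" where "Y2 p = (\<Sum>j\<le>p. Tr (2*p+4) (2*j+4))"

lemma XY_closed:
  "X1 p = (4::real)^p * (real p+1) * (2*real p+5) \<and> X2 p = (4::real)^p * (real p+1) * (2*real p+1) \<and>
   Y1 p = (4::real)^p * (8*real p+4) + 1 \<and> Y2 p = (4::real)^p * (8*real p - 4) + 2*real p + 5"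
proof (induction p)
  case 0
  have a: "Tr 4 3 = 5" "Tr 4 4 = 1"
    by (simp_all add: Tr_step[of 4 3] Tr_same c43)
  show ?case by (simp add: X1_def X2_def Y1_def Y2_def a)
next
  case (Suc p)
  define M where "M = 2*p+4"
  have MM: "2 * Suc p + 4 = Suc (Suc M)" unfolding M_def by simp
  have z5: "Tr M (2*p+5) = 0" and z6: "Tr M (2*p+6) = 0" unfolding M_def by (simp_all add: Tr_top)
  have pM: "(2::real)^M = 16 * 4^p" unfolding M_def by (simp add: power_add power_mult)
  have s3: "(\<Sum>j\<le>Suc p. real (j+1) * Tr M (2*j+3)) = X1 p"
    using z5 by (simp add: X1_def M_def add.commute)
  have s4: "(\<Sum>j\<le>Suc p. real (j+1) * Tr M (2*j+4)) = X2 p"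
    using z6 by (simp add: X2_def M_def add.commute)
  have s2: "(\<Sum>j\<le>Suc p. real (j+1) * Tr M (2*j+2)) = Tr M 2 + X2 p + Y2 p"
  proof -
    have "(\<Sum>j\<le>p. real (Suc j+1) * Tr M (2*Suc j+2)) = X2 p + Y2 p"
      unfolding X2_def Y2_def M_def sum.distrib[symmetric]
      by (rule sum.cong) (simp_all add: algebra_simps eval_nat_numeral)
    then show ?thesis unfolding sum.atMost_Suc_shift by (simp add: numeral_2_eq_2)
  qed
  have s1: "(\<Sum>j\<le>Suc p. real (j+1) * Tr M (2*j+1)) = Tr M 1 + X1 p + Y1 p"
  proof -
    have "(\<Sum>j\<le>p. real (Suc j+1) * Tr M (2*Suc j+1)) = X1 p + Y1 p"
      unfolding X1_def Y1_def M_def sum.distrib[symmetric]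
      by (rule sum.cong) (simp_all add: algebra_simps eval_nat_numeral)
    then show ?thesis unfolding sum.atMost_Suc_shift by simp
  qed
  have t3: "(\<Sum>j\<le>Suc p. Tr M (2*j+3)) = Y1 p"
    using z5 by (simp add: Y1_def M_def add.commute)
  have t4: "(\<Sum>j\<le>Suc p. Tr M (2*j+4)) = Y2 p"
    using z6 by (simp add: Y2_def M_def add.commute)
  have t2: "(\<Sum>j\<le>Suc p. Tr M (2*j+2)) = Tr M 2 + Y2 p"
  proof -
    have "(\<Sum>j\<le>p. Tr M (2*Suc j+2)) = Y2 p"
      unfolding Y2_def M_def by (rule sum.cong) (simp_all add: eval_nat_numeral)
    then show ?thesis unfolding sum.atMost_Suc_shift by (simp add: numeral_2_eq_2)
  qed
  have t1: "(\<Sum>j\<le>Suc p. Tr M (2*j+1)) = Tr M 1 + Y1 p"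
  proof -
    have "(\<Sum>j\<le>p. Tr M (2*Suc j+1)) = Y1 p"
      unfolding Y1_def M_def by (rule sum.cong) (simp_all add: eval_nat_numeral)
    then show ?thesis unfolding sum.atMost_Suc_shift by simp
  qed
  have eX1a: "X1 (Suc p) = (\<Sum>j\<le>Suc p. real (j+1) * Tr M (2*j+3)) + 2 * (\<Sum>j\<le>Suc p. real (j+1) * Tr M (2*j+2)) + (\<Sum>j\<le>Suc p. real (j+1) * Tr M (2*j+1))"
    unfolding X1_def MM Tr_p2a by (simp add: sum.distrib sum_distrib_left algebra_simps)
  have eX1: "X1 (Suc p) = X1 p + 2 * (Tr M 2 + X2 p + Y2 p) + (Tr M 1 + X1 p + Y1 p)"
    using eX1a unfolding s1 s2 s3 .
  have eX2a: "X2 (Suc p) = (\<Sum>j\<le>Suc p. real (j+1) * Tr M (2*j+4)) + 2 * (\<Sum>j\<le>Suc p. real (j+1) * Tr M (2*j+3)) + (\<Sum>j\<le>Suc p. real (j+1) * Tr M (2*j+2))"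
    unfolding X2_def MM Tr_p2b by (simp add: sum.distrib sum_distrib_left algebra_simps)
  have eX2: "X2 (Suc p) = X2 p + 2 * X1 p + (Tr M 2 + X2 p + Y2 p)"
    using eX2a unfolding s4 s3 s2 .
  have eY1a: "Y1 (Suc p) = (\<Sum>j\<le>Suc p. Tr M (2*j+3)) + 2 * (\<Sum>j\<le>Suc p. Tr M (2*j+2)) + (\<Sum>j\<le>Suc p. Tr M (2*j+1))"
    unfolding Y1_def MM Tr_p2a by (simp add: sum.distrib sum_distrib_left)
  have eY1: "Y1 (Suc p) = Y1 p + 2 * (Tr M 2 + Y2 p) + (Tr M 1 + Y1 p)"
    using eY1a unfolding t1 t2 t3 .
  have eY2a: "Y2 (Suc p) = (\<Sum>j\<le>Suc p. Tr M (2*j+4)) + 2 * (\<Sum>j\<le>Suc p. Tr M (2*j+3)) + (\<Sum>j\<le>Suc p. Tr M (2*j+2))"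
    unfolding Y2_def MM Tr_p2b by (simp add: sum.distrib sum_distrib_left)
  have eY2: "Y2 (Suc p) = Y2 p + 2 * Y1 p + (Tr M 2 + Y2 p)"
    using eY2a unfolding t4 t3 t2 .
  have T1: "Tr M 1 = 16*(4::real)^p - 1" using Tr_1[of M] pM by simp
  have T2: "Tr M 2 = 16*(4::real)^p - 1 - (2*real p+4)" using Tr_2[of M] pM by (simp add: M_def)
  show ?case using Suc.IH unfolding eX1 eX2 eY1 eY2 T1 T2
    by (simp add: algebra_simps)
qed

lemma tele2:
  assumes "a \<le> b+1" "\<And>k. f k = c + k" "U = c+b+1" "L = c+a"
  shows "(\<Sum>k=a..b. real (f k choose r) / 2^k) = 2 * Tr U (Suc r) / 2^(b+1) - 2 * Tr L (Suc r) / 2^a"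
proof -
  have "{a..b} = {a..<a+(b+1-a)}" using assms(1) by auto
  then have "(\<Sum>k=a..b. real (f k choose r) / 2^k) = (\<Sum>k\<in>{a..<a+(b+1-a)}. real ((c+k) choose r) / 2^k)"
    using assms(2) by simp
  also have "\<dots> = 2 * Tr (c+a+(b+1-a)) (Suc r) / 2^(a+(b+1-a)) - 2 * Tr (c+a) (Suc r) / 2^a"
    by (rule tele)
  also have e1: "c+a+(b+1-a) = U" using assms by simp
  also have e2: "a+(b+1-a) = b+1" using assms(1) by simp
  finally show ?thesis using assms(4) by simp
qed

lemma gauss_real: "(\<Sum>j\<le>p. real (j+1)) = (real p+1)*(real p+2)/2"
  by (induction p) (simp_all add: field_simps)

lemma shift1: "(\<Sum>i=1..p+1. f i) = (\<Sum>j\<le>p. f (Suc j))"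
proof -
  have "(\<Sum>i=Suc 0..Suc p. f i) = (\<Sum>j=0..p. f (Suc j))"
    by (simp only: sum.shift_bounds_cl_Suc_ivl o_def)
  then show ?thesis by (simp add: atMost_atLeast0)
qed

lemma S_closed:
  fixes p :: nat
  defines "M \<equiv> 2*p+4"
  shows "(\<Sum>i=1..p+1. real i * real ((2*p+4) choose (2*i+1))) = X1 p - X2 p"
    and "(\<Sum>i=1..p+1. real i * Tr (2*p+5) (2*i+2)) = X1 p + X2 p"
    and "(\<Sum>i=1..p+1. real i * Tr (2*p+4) (2*p+3-2*i)) = 2^M * ((real p+1)*(real p+2)/2) - X2 p"
    and "(\<Sum>i=1..p+1. real i * Tr (2*p+5) (2*p+3-2*i)) = 2^(M+1) * ((real p+1)*(real p+2)/2) - (X1 p - Y1 p) - X2 p"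
proof -
  show "(\<Sum>i=1..p+1. real i * real ((2*p+4) choose (2*i+1))) = X1 p - X2 p"
    unfolding shift1 X1_def X2_def sum_subtractf[symmetric]
  proof (rule sum.cong)
    fix j assume "j \<in> {..p}"
    have "Tr (2*p+4) (2*j+3) = real ((2*p+4) choose (2*j+3)) + Tr (2*p+4) (2*j+4)"
      using Tr_step[of "2*p+4" "2*j+3"] by (simp add: eval_nat_numeral)
    then show "real (Suc j) * real ((2*p+4) choose (2*Suc j+1)) = real (j+1) * Tr (2*p+4) (2*j+3) - real (j+1) * Tr (2*p+4) (2*j+4)"
      by (simp add: algebra_simps eval_nat_numeral)
  qed simp
  show "(\<Sum>i=1..p+1. real i * Tr (2*p+5) (2*i+2)) = X1 p + X2 p"
    unfolding shift1 X1_def X2_def sum.distrib[symmetric]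
  proof (rule sum.cong)
    fix j assume "j \<in> {..p}"
    have "Tr (2*p+5) (2*j+4) = Tr (2*p+4) (2*j+4) + Tr (2*p+4) (2*j+3)"
      using Tr_pascal[of "2*p+4" "2*j+3"] by (simp add: eval_nat_numeral)
    then show "real (Suc j) * Tr (2*p+5) (2*Suc j+2) = real (j+1) * Tr (2*p+4) (2*j+3) + real (j+1) * Tr (2*p+4) (2*j+4)"
      by (simp add: algebra_simps eval_nat_numeral)
  qed simp
  show "(\<Sum>i=1..p+1. real i * Tr (2*p+4) (2*p+3-2*i)) = 2^M * ((real p+1)*(real p+2)/2) - X2 p"
    unfolding shift1 X2_def gauss_real[symmetric] sum_distrib_left sum_subtractf[symmetric]
  proof (rule sum.cong)
    fix j assume j: "j \<in> {..p}"
    have A: "Tr (2*p+4) (2*j+4) + Tr (2*p+4) (Suc (2*p+4) - (2*j+4)) = 2^(2*p+4)"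
      by (rule Tr_sym) (use j in auto)
    have eq: "2*p+3 - 2 * Suc j = Suc (2*p+4) - (2*j+4)" using j by auto
    have h: "Tr (2*p+4) (2*p+3 - 2 * Suc j) = 2^(2*p+4) - Tr (2*p+4) (2*j+4)"
      using A unfolding eq by linarith
    show "real (Suc j) * Tr (2*p+4) (2*p+3 - 2 * Suc j) = 2^M * real (j+1) - real (j+1) * Tr (2*p+4) (2*j+4)"
      unfolding h M_def by (simp add: algebra_simps)
  qed simp
  have z: "Tr (2*p+4) (2*p+5) = 0" by (simp add: Tr_top)
  have shiftX: "(\<Sum>j\<le>p. real (j+1) * Tr (2*p+4) (2*j+5)) = X1 p - Y1 p"
  proof -
    have "(\<Sum>j\<le>p. real (Suc j) * Tr (2*p+4) (2*Suc j+3)) = (\<Sum>j\<le>p. real (j+1) * Tr (2*p+4) (2*j+5))"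
      by (rule sum.cong) (simp_all add: eval_nat_numeral)
    then have "(\<Sum>j\<le>Suc p. real j * Tr (2*p+4) (2*j+3)) = (\<Sum>j\<le>p. real (j+1) * Tr (2*p+4) (2*j+5))"
      unfolding sum.atMost_Suc_shift by simp
    moreover have "(\<Sum>j\<le>Suc p. real j * Tr (2*p+4) (2*j+3)) = (\<Sum>j\<le>p. real j * Tr (2*p+4) (2*j+3))"
      using z by (simp add: add.commute)
    moreover have "(\<Sum>j\<le>p. real j * Tr (2*p+4) (2*j+3)) = X1 p - Y1 p"
      unfolding X1_def Y1_def sum_subtractf[symmetric] by (rule sum.cong) (simp_all add: algebra_simps)
    ultimately show ?thesis by simp
  qed
  show "(\<Sum>i=1..p+1. real i * Tr (2*p+5) (2*p+3-2*i)) = 2^(M+1) * ((real p+1)*(real p+2)/2) - (X1 p - Y1 p) - X2 p"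
    unfolding shift1 X2_def shiftX[symmetric] gauss_real[symmetric] sum_distrib_left sum_subtractf[symmetric]
  proof (rule sum.cong)
    fix j assume j: "j \<in> {..p}"
    have A: "Tr (2*p+5) (2*j+5) + Tr (2*p+5) (Suc (2*p+5) - (2*j+5)) = 2^(2*p+5)"
      by (rule Tr_sym) (use j in auto)
    have eq: "2*p+3 - 2 * Suc j = Suc (2*p+5) - (2*j+5)" using j by auto
    have B: "Tr (2*p+5) (2*j+5) = Tr (2*p+4) (2*j+5) + Tr (2*p+4) (2*j+4)"
      using Tr_pascal[of "2*p+4" "2*j+4"] by (simp add: eval_nat_numeral)
    have h: "Tr (2*p+5) (2*p+3 - 2 * Suc j) = 2^(2*p+5) - Tr (2*p+4) (2*j+5) - Tr (2*p+4) (2*j+4)"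
      using A B unfolding eq by linarith
    show "real (Suc j) * Tr (2*p+5) (2*p+3 - 2 * Suc j) = 2^(M+1) * real (j+1) - real (j+1) * Tr (2*p+4) (2*j+5) - real (j+1) * Tr (2*p+4) (2*j+4)"
      unfolding h M_def by (simp add: algebra_simps)
  qed simp
qed


lemma per_i:
  fixes x y N K A1 i c1 c2 t1 t2 t3 c4 u5 v4 v5 w4 w5 c :: real
  assumes "x > 0" "y > 0" "N > 0" "c > 0" "K = 2*N+2" "A1 = N - 1"
    "c1 = t1 - t2" "c2 = t2 - t3" "w4 = 16*x*y - t2" "w5 = 32*x*y - t3 - t2"
  shows "(1/(x*y)) * (i*(2*c1 - c2 - K*c4))
       + (4/x) * (i*(A1/N*(2*t2/(4*y)) - (2*t1/(4*y) - 2/c) + (2*u5/(4*y) - 2/c)))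
       + (1/y) * (i*((2*w5/(2*x) - 2*v5/2) - K/N*(2*w4/(2*x) - 2*v4/2)))
     = (2/(x*y))*(i*u5) + (-K/(x*y))*(i*c4) + (-32/N)*i + (K/(N*y))*(i*v4) + (-1/y)*(i*v5)"
proof -
  have e: "(4/x) * (i*(A1/N*(2*t2/(4*y)) - (2*t1/(4*y) - 2/c) + (2*u5/(4*y) - 2/c)))
      = (4/x) * (i*(A1/N*(2*t2/(4*y)) - 2*t1/(4*y) + 2*u5/(4*y)))"
    by (simp add: algebra_simps)
  have nz: "x \<noteq> 0" "y \<noteq> 0" "N \<noteq> 0" using assms by auto
  show ?thesis unfolding e assms(5-10)
    using nz by (simp add: field_simps)
qed

lemma lin5: "(\<Sum>i\<in>S. a*f1 i + b*f2 i + c*f3 i + d*f4 i + e*f5 i)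
   = a*(\<Sum>i\<in>S. f1 i) + b*(\<Sum>i\<in>S. f2 i) + c*(\<Sum>i\<in>S. f3 i) + d*(\<Sum>i\<in>S. f4 i) + e*(\<Sum>i\<in>S. (f5 i::real))"
  by (simp add: sum.distrib sum_distrib_left)

lemma lin3: "(\<Sum>i\<in>S. a*f1 i + b*f2 i + c*f3 i) = a*(\<Sum>i\<in>S. f1 i) + b*(\<Sum>i\<in>S. f2 i) + c*(\<Sum>i\<in>S. (f3 i::real))"
  by (simp add: sum.distrib sum_distrib_left)

lemma final_alg:
  fixes x y nn pp S1 S2 S3 S4 W X1v X2v Y1v :: real
  assumes "x > 0" "y > 0" "nn \<ge> 0" "pp \<ge> 0"
    "X1v = y*(pp+1)*(2*pp+5)" "X2v = y*(pp+1)*(2*pp+1)" "Y1v = y*(8*pp+4)+1"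
    "S4 = X1v - X2v" "S3 = X1v + X2v" "W = (pp+1)*(pp+2)/2"
    "S1 = 16*y*W - X2v" "S2 = 32*y*W - (X1v - Y1v) - X2v"
  shows "(4 * pp ^ 2 + 6 * pp + 2) / (nn + 2 * pp + 2) + 4 * pp
     + (4 * pp ^ 2 + 4 * nn * pp + 4 * nn + 10 * pp + 6) * (2/x) + 1/y
     + ((2/(x*y)) * S3 + (-(2 * nn + 4 * pp + 6)/(x*y)) * S4 + (-32/(nn + 2 * pp + 2)) * W
       + ((2 * nn + 4 * pp + 6)/((nn + 2 * pp + 2)*y)) * S1 + (-1/y) * S2)
     = 0"
proof -
  have "nn + 2*pp + 2 > 0" using assms by simp
  then have nz: "nn + 2*pp + 2 \<noteq> 0" "x \<noteq> 0" "y \<noteq> 0" using assms by auto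
  have i1: "x * inverse x = 1" "y * inverse y = 1" "(nn + 2*pp + 2) * inverse (nn + 2*pp + 2) = 1"
    using nz by auto
  show ?thesis unfolding assms(5-12) divide_inverse inverse_mult_distrib inverse_minus_eq
    using i1 by algebra
qed

lemma ringD: "(i::real)*a + (- i*b)*c + 0*z = i*(a - b*c)"
  by (simp add: algebra_simps)

lemma pw2: "(2::real) powi (a - int k) = 2 powi a / 2^k"
  by (simp add: power_int_diff)

theorem lemma13:
  fixes n p :: nat
  shows "g n p = 0"
proof -
  define x where "x = (2::real)^n"
  define y where "y = (4::real)^p"
  define m where "m = n+2*p+4"
  have xpos: "x > 0" and ypos: "y > 0" unfolding x_def y_def by simp_all
  have Npos: "real n + 2 * real p + 2 > 0" by simp
  have P1: "(2::real) powi (1 - int n) = 2/x"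
    using pw2[of 1 n] by (simp add: x_def)
  have P4: "(2::real) powi (2 - int n) = 4/x"
    using pw2[of 2 n] by (simp add: x_def)
  have P2: "(2::real) powi (- 2 * int p) = 1/y"
  proof -
    have "(2::real) powi (- 2 * int p) = 2 powi (- int (2*p))" by simp
    also have "\<dots> = 1/2^(2*p)" by (rule pw)
    finally show ?thesis by (simp add: y_def power_mult)
  qed
  have P3: "(2::real) powi (- int n - 2 * int p) = 1/(x*y)"
  proof -
    have "(2::real) powi (- int n - 2 * int p) = 2 powi (- int (n+2*p))" by simp
    also have "\<dots> = 1/2^(n+2*p)" by (rule pw)
    finally show ?thesis by (simp add: x_def y_def power_mult power_add)
  qed
  have nzN: "real n + 2 * real p + 2 \<noteq> 0" and nzx: "x \<noteq> 0" and nzy: "y \<noteq> 0"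
    using xpos ypos by auto
  have p22: "(2::real)^(2*p+1+1) = 4*y" by (simp add: y_def power_add power_mult)
  have nzN: "real n + 2 * real p + 2 \<noteq> 0" and nzx: "x \<noteq> 0" and nzy: "y \<noteq> 0"
    using xpos ypos by auto
  have p22: "(2::real)^(2*p+1+1) = 4*y" by (simp add: y_def power_add power_mult)
  have pn: "(2::real)^(n+1) = 2*x" by (simp add: x_def)
  have hB: "(\<Sum>k=2*i-1..2*p+1. real i * (2::real) powi (- int k) *
          ((real n + 2 * real p + 1) / (real n + 2 * real p + 2) * real ((n + k + 2) choose (n + 2*i + 1))
           - real ((n + k + 2) choose (n + 2*i))
           + real ((k + 3) choose (2*i + 1))))
     = real i * ((real n + 2 * real p + 1) / (real n + 2 * real p + 2) * (2*Tr m (n+2*i+2)/(4*y))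
           - (2*Tr m (n+2*i+1)/(4*y) - 2/2^(2*i-1)) + (2*Tr (2*p+5) (2*i+2)/(4*y) - 2/2^(2*i-1)))"
    if hi: "i \<in> {1..p+1}" for i
  proof -
    let ?a = "(real n + 2 * real p + 1) / (real n + 2 * real p + 2)"
    have L: "(\<Sum>k=2*i-1..2*p+1. real i * (2::real) powi (- int k) *
          (?a * real ((n + k + 2) choose (n + 2*i + 1)) - real ((n + k + 2) choose (n + 2*i)) + real ((k + 3) choose (2*i + 1))))
        = (real i * ?a) * (\<Sum>k=2*i-1..2*p+1. real ((n + k + 2) choose (n + 2*i + 1)) / 2^k)
            + (- real i) * (\<Sum>k=2*i-1..2*p+1. real ((n + k + 2) choose (n + 2*i)) / 2^k)
            + real i * (\<Sum>k=2*i-1..2*p+1. real ((k + 3) choose (2*i + 1)) / 2^k)"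
    proof -
      have "(\<Sum>k=2*i-1..2*p+1. real i * (2::real) powi (- int k) *
          (?a * real ((n + k + 2) choose (n + 2*i + 1)) - real ((n + k + 2) choose (n + 2*i)) + real ((k + 3) choose (2*i + 1))))
        = (\<Sum>k=2*i-1..2*p+1. (real i * ?a) * (real ((n + k + 2) choose (n + 2*i + 1)) / 2^k)
            + (- real i) * (real ((n + k + 2) choose (n + 2*i)) / 2^k) + real i * (real ((k + 3) choose (2*i + 1)) / 2^k))"
        by (rule sum.cong[OF refl]) (simp add: pw divide_inverse algebra_simps)
      also have "\<dots> = (real i * ?a) * (\<Sum>k=2*i-1..2*p+1. real ((n + k + 2) choose (n + 2*i + 1)) / 2^k)
            + (- real i) * (\<Sum>k=2*i-1..2*p+1. real ((n + k + 2) choose (n + 2*i)) / 2^k)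
            + real i * (\<Sum>k=2*i-1..2*p+1. real ((k + 3) choose (2*i + 1)) / 2^k)"
        by (rule lin3)
      finally show ?thesis .
    qed
    have e1: "(\<Sum>k=2*i-1..2*p+1. real ((n + k + 2) choose (n + 2*i + 1)) / 2^k) = 2 * Tr m (n+2*i+2) / (4*y)"
    proof -
      have "(\<Sum>k=2*i-1..2*p+1. real ((n + k + 2) choose (n + 2*i + 1)) / 2^k)
        = 2 * Tr m (Suc (n+2*i+1)) / 2^(2*p+1+1) - 2 * Tr (n+2*i+1) (Suc (n+2*i+1)) / 2^(2*i-1)"
        by (rule tele2[where c="n+2"]) (use hi in \<open>auto simp: m_def\<close>)
      also have "\<dots> = 2 * Tr m (n+2*i+2) / (4*y)" unfolding p22 by (simp add: Tr_top)
      finally show ?thesis .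
    qed
    have e2: "(\<Sum>k=2*i-1..2*p+1. real ((n + k + 2) choose (n + 2*i)) / 2^k) = 2 * Tr m (n+2*i+1) / (4*y) - 2/2^(2*i-1)"
    proof -
      have "(\<Sum>k=2*i-1..2*p+1. real ((n + k + 2) choose (n + 2*i)) / 2^k)
        = 2 * Tr m (Suc (n+2*i)) / 2^(2*p+1+1) - 2 * Tr (n+2*i+1) (Suc (n+2*i)) / 2^(2*i-1)"
        by (rule tele2[where c="n+2"]) (use hi in \<open>auto simp: m_def\<close>)
      also have "\<dots> = 2 * Tr m (n+2*i+1) / (4*y) - 2/2^(2*i-1)" unfolding p22 by (simp add: Tr_same)
      finally show ?thesis .
    qed
    have e3: "(\<Sum>k=2*i-1..2*p+1. real ((k + 3) choose (2*i + 1)) / 2^k) = 2 * Tr (2*p+5) (2*i+2) / (4*y) - 2/2^(2*i-1)"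
    proof -
      have "(\<Sum>k=2*i-1..2*p+1. real ((k + 3) choose (2*i + 1)) / 2^k)
        = 2 * Tr (2*p+5) (Suc (2*i+1)) / 2^(2*p+1+1) - 2 * Tr (2*i+2) (Suc (2*i+1)) / 2^(2*i-1)"
        by (rule tele2[where c="3"]) (use hi in \<open>auto\<close>)
      also have "\<dots> = 2 * Tr (2*p+5) (2*i+2) / (4*y) - 2/2^(2*i-1)" unfolding p22 by (simp add: Tr_same)
      finally show ?thesis .
    qed
    show ?thesis unfolding L e1 e2 e3 using nzN nzy by (simp add: field_simps)
  qed
  have hD: "(\<Sum>k=1..n. real i * (2::real) powi (- int k) *
          (real ((k + 2*p + 4) choose (k + 2*i + 2))
           - (2 * real n + 4 * real p + 6) / (real n + 2 * real p + 2) * real ((k + 2*p + 3) choose (k + 2*i + 1))))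
     = real i * ((2 * Tr (m+1) (2*p+3-2*i) / (2*x) - 2 * Tr (2*p+5) (2*p+3-2*i) / 2)
         - (2 * real n + 4 * real p + 6) / (real n + 2 * real p + 2) * (2 * Tr m (2*p+3-2*i) / (2*x) - 2 * Tr (2*p+4) (2*p+3-2*i) / 2))"
    if hi: "i \<in> {1..p+1}" for i
  proof -
    let ?b = "(2 * real n + 4 * real p + 6) / (real n + 2 * real p + 2)"
    have sy1: "(k + 2*p + 4) choose (k + 2*i + 2) = (k + 2*p + 4) choose (2*p+2-2*i)" for k
      using hi binomial_symmetric[of "k + 2*i + 2" "k + 2*p + 4"] by (auto simp: algebra_simps)
    have sy2: "(k + 2*p + 3) choose (k + 2*i + 1) = (k + 2*p + 3) choose (2*p+2-2*i)" for k
      using hi binomial_symmetric[of "k + 2*i + 1" "k + 2*p + 3"] by (auto simp: algebra_simps)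
    have L: "(\<Sum>k=1..n. real i * (2::real) powi (- int k) *
          (real ((k + 2*p + 4) choose (k + 2*i + 2)) - ?b * real ((k + 2*p + 3) choose (k + 2*i + 1))))
        = real i * (\<Sum>k=1..n. real ((k + 2*p + 4) choose (2*p+2-2*i)) / 2^k)
            + (- real i * ?b) * (\<Sum>k=1..n. real ((k + 2*p + 3) choose (2*p+2-2*i)) / 2^k) + 0 * (\<Sum>k=1..n. (0::real))"
    proof -
      have "(\<Sum>k=1..n. real i * (2::real) powi (- int k) *
          (real ((k + 2*p + 4) choose (k + 2*i + 2)) - ?b * real ((k + 2*p + 3) choose (k + 2*i + 1))))
        = (\<Sum>k=1..n. real i * (real ((k + 2*p + 4) choose (2*p+2-2*i)) / 2^k)
            + (- real i * ?b) * (real ((k + 2*p + 3) choose (2*p+2-2*i)) / 2^k) + 0 * 0)"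
        apply (rule sum.cong[OF refl])
        apply (subst sy1, subst sy2)
        apply (simp add: pw divide_inverse algebra_simps)
        done
      also have "\<dots> = real i * (\<Sum>k=1..n. real ((k + 2*p + 4) choose (2*p+2-2*i)) / 2^k)
            + (- real i * ?b) * (\<Sum>k=1..n. real ((k + 2*p + 3) choose (2*p+2-2*i)) / 2^k) + 0 * (\<Sum>k=1..n. (0::real))"
        by (rule lin3)
      finally show ?thesis .
    qed
    have sc: "Suc (2*p+2-2*i) = 2*p+3-2*i" using hi by auto
    have e1: "(\<Sum>k=1..n. real ((k + 2*p + 4) choose (2*p+2-2*i)) / 2^k)
        = 2 * Tr (m+1) (2*p+3-2*i) / (2*x) - 2 * Tr (2*p+5) (2*p+3-2*i) / 2"
    proof -
      have "(\<Sum>k=1..n. real ((k + 2*p + 4) choose (2*p+2-2*i)) / 2^k)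
        = 2 * Tr (m+1) (Suc (2*p+2-2*i)) / 2^(n+1) - 2 * Tr (2*p+5) (Suc (2*p+2-2*i)) / 2^1"
        by (rule tele2[where c="2*p+4"]) (auto simp: m_def)
      then show ?thesis unfolding sc pn by simp
    qed
    have e2: "(\<Sum>k=1..n. real ((k + 2*p + 3) choose (2*p+2-2*i)) / 2^k)
        = 2 * Tr m (2*p+3-2*i) / (2*x) - 2 * Tr (2*p+4) (2*p+3-2*i) / 2"
    proof -
      have "(\<Sum>k=1..n. real ((k + 2*p + 3) choose (2*p+2-2*i)) / 2^k)
        = 2 * Tr m (Suc (2*p+2-2*i)) / 2^(n+1) - 2 * Tr (2*p+4) (Suc (2*p+2-2*i)) / 2^1"
        by (rule tele2[where c="2*p+3"]) (auto simp: m_def)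
      then show ?thesis unfolding sc pn by simp
    qed
    show ?thesis unfolding L e1 e2 by (rule ringD)
  qed
  have pm: "(2::real)^m = 16*x*y" by (simp add: m_def x_def y_def power_add power_mult)
  have pm1: "(2::real)^(m+1) = 32*x*y" by (simp add: m_def x_def y_def power_add power_mult)
  have hcomb: "(1/(x*y)) * (real i * (2 * real ((n + 2*p + 4) choose (n + 2*i + 1))
           - real ((n + 2*p + 4) choose (n + 2*i + 2))
           - (2 * real n + 4 * real p + 6) * real ((2*p + 4) choose (2*i + 1))))
     + (4/x) * (real i * ((real n + 2 * real p + 1) / (real n + 2 * real p + 2) * (2*Tr m (n+2*i+2)/(4*y))
           - (2*Tr m (n+2*i+1)/(4*y) - 2/2^(2*i-1)) + (2*Tr (2*p+5) (2*i+2)/(4*y) - 2/2^(2*i-1))))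
     + (1/y) * (real i * ((2 * Tr (m+1) (2*p+3-2*i) / (2*x) - 2 * Tr (2*p+5) (2*p+3-2*i) / 2)
         - (2 * real n + 4 * real p + 6) / (real n + 2 * real p + 2) * (2 * Tr m (2*p+3-2*i) / (2*x) - 2 * Tr (2*p+4) (2*p+3-2*i) / 2)))
     = (2/(x*y)) * (real i * Tr (2*p+5) (2*i+2))
       + (-(2 * real n + 4 * real p + 6)/(x*y)) * (real i * real ((2*p + 4) choose (2*i + 1)))
       + (-32/(real n + 2 * real p + 2)) * real i
       + ((2 * real n + 4 * real p + 6)/((real n + 2 * real p + 2)*y)) * (real i * Tr (2*p+4) (2*p+3-2*i))
       + (-1/y) * (real i * Tr (2*p+5) (2*p+3-2*i))"
    if hi: "i \<in> {1..p+1}" for i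
  proof (rule per_i)
    show "x > 0" "y > 0" "real n + 2 * real p + 2 > 0" "(2::real)^(2*i-1) > 0" by (simp_all add: xpos ypos)
    show "2 * real n + 4 * real p + 6 = 2 * (real n + 2 * real p + 2) + 2" by simp
    show "real n + 2 * real p + 1 = real n + 2 * real p + 2 - 1" by simp
    show "real ((n + 2*p + 4) choose (n + 2*i + 1)) = Tr m (n+2*i+1) - Tr m (n+2*i+2)"
      using Tr_step[of m "n+2*i+1"] unfolding m_def by simp
    show "real ((n + 2*p + 4) choose (n + 2*i + 2)) = Tr m (n+2*i+2) - Tr m (n+2*i+3)"
      using Tr_step[of m "n+2*i+2"] unfolding m_def by (simp add: eval_nat_numeral)
    have A: "Tr m (n+2*i+2) + Tr m (Suc m - (n+2*i+2)) = 2^m"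
      by (rule Tr_sym) (use hi in \<open>simp add: m_def\<close>)
    have eq: "Suc m - (n+2*i+2) = 2*p+3-2*i" using hi by (simp add: m_def)
    show "Tr m (2*p+3-2*i) = 16*x*y - Tr m (n+2*i+2)"
      using A unfolding eq pm by linarith
    have A2: "Tr (m+1) (n+2*i+3) + Tr (m+1) (Suc (m+1) - (n+2*i+3)) = 2^(m+1)"
      by (rule Tr_sym) (use hi in \<open>simp add: m_def\<close>)
    have eq2: "Suc (m+1) - (n+2*i+3) = 2*p+3-2*i" using hi by (simp add: m_def)
    have P: "Tr (m+1) (n+2*i+3) = Tr m (n+2*i+3) + Tr m (n+2*i+2)"
      using Tr_pascal[of m "n+2*i+2"] by (simp add: eval_nat_numeral)
    show "Tr (m+1) (2*p+3-2*i) = 32*x*y - Tr m (n+2*i+3) - Tr m (n+2*i+2)"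
      using A2 P unfolding eq2 pm1 by linarith
  qed
  have sB: "(\<Sum>i=1..p+1. \<Sum>k=2*i-1..2*p+1. real i * (2::real) powi (- int k) *
          ((real n + 2 * real p + 1) / (real n + 2 * real p + 2) * real ((n + k + 2) choose (n + 2*i + 1))
           - real ((n + k + 2) choose (n + 2*i))
           + real ((k + 3) choose (2*i + 1))))
     = (\<Sum>i=1..p+1. real i * ((real n + 2 * real p + 1) / (real n + 2 * real p + 2) * (2*Tr m (n+2*i+2)/(4*y))
           - (2*Tr m (n+2*i+1)/(4*y) - 2/2^(2*i-1)) + (2*Tr (2*p+5) (2*i+2)/(4*y) - 2/2^(2*i-1))))"
    by (rule sum.cong[OF refl]) (rule hB)
  have sD: "(\<Sum>i=1..p+1. \<Sum>k=1..n. real i * (2::real) powi (- int k) *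
          (real ((k + 2*p + 4) choose (k + 2*i + 2))
           - (2 * real n + 4 * real p + 6) / (real n + 2 * real p + 2) * real ((k + 2*p + 3) choose (k + 2*i + 1))))
     = (\<Sum>i=1..p+1. real i * ((2 * Tr (m+1) (2*p+3-2*i) / (2*x) - 2 * Tr (2*p+5) (2*p+3-2*i) / 2)
         - (2 * real n + 4 * real p + 6) / (real n + 2 * real p + 2) * (2 * Tr m (2*p+3-2*i) / (2*x) - 2 * Tr (2*p+4) (2*p+3-2*i) / 2)))"
    by (rule sum.cong[OF refl]) (rule hD)
  have sc: "(1/(x*y)) * (\<Sum>i=1..p+1. real i * (2 * real ((n + 2*p + 4) choose (n + 2*i + 1))
           - real ((n + 2*p + 4) choose (n + 2*i + 2))
           - (2 * real n + 4 * real p + 6) * real ((2*p + 4) choose (2*i + 1))))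
     + (4/x) * (\<Sum>i=1..p+1. real i * ((real n + 2 * real p + 1) / (real n + 2 * real p + 2) * (2*Tr m (n+2*i+2)/(4*y))
           - (2*Tr m (n+2*i+1)/(4*y) - 2/2^(2*i-1)) + (2*Tr (2*p+5) (2*i+2)/(4*y) - 2/2^(2*i-1))))
     + (1/y) * (\<Sum>i=1..p+1. real i * ((2 * Tr (m+1) (2*p+3-2*i) / (2*x) - 2 * Tr (2*p+5) (2*p+3-2*i) / 2)
         - (2 * real n + 4 * real p + 6) / (real n + 2 * real p + 2) * (2 * Tr m (2*p+3-2*i) / (2*x) - 2 * Tr (2*p+4) (2*p+3-2*i) / 2)))
     = (2/(x*y)) * (\<Sum>i=1..p+1. real i * Tr (2*p+5) (2*i+2))
       + (-(2 * real n + 4 * real p + 6)/(x*y)) * (\<Sum>i=1..p+1. real i * real ((2*p + 4) choose (2*i + 1)))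
       + (-32/(real n + 2 * real p + 2)) * (\<Sum>i=1..p+1. real i)
       + ((2 * real n + 4 * real p + 6)/((real n + 2 * real p + 2)*y)) * (\<Sum>i=1..p+1. real i * Tr (2*p+4) (2*p+3-2*i))
       + (-1/y) * (\<Sum>i=1..p+1. real i * Tr (2*p+5) (2*p+3-2*i))"
    (is "?L = ?R")
  proof -
    have "?L = (\<Sum>i=1..p+1. (1/(x*y)) * (real i * (2 * real ((n + 2*p + 4) choose (n + 2*i + 1))
           - real ((n + 2*p + 4) choose (n + 2*i + 2))
           - (2 * real n + 4 * real p + 6) * real ((2*p + 4) choose (2*i + 1))))
     + (4/x) * (real i * ((real n + 2 * real p + 1) / (real n + 2 * real p + 2) * (2*Tr m (n+2*i+2)/(4*y))
           - (2*Tr m (n+2*i+1)/(4*y) - 2/2^(2*i-1)) + (2*Tr (2*p+5) (2*i+2)/(4*y) - 2/2^(2*i-1))))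
     + (1/y) * (real i * ((2 * Tr (m+1) (2*p+3-2*i) / (2*x) - 2 * Tr (2*p+5) (2*p+3-2*i) / 2)
         - (2 * real n + 4 * real p + 6) / (real n + 2 * real p + 2) * (2 * Tr m (2*p+3-2*i) / (2*x) - 2 * Tr (2*p+4) (2*p+3-2*i) / 2))))"
      by (rule lin3[symmetric])
    also have "\<dots> = (\<Sum>i=1..p+1. (2/(x*y)) * (real i * Tr (2*p+5) (2*i+2))
       + (-(2 * real n + 4 * real p + 6)/(x*y)) * (real i * real ((2*p + 4) choose (2*i + 1)))
       + (-32/(real n + 2 * real p + 2)) * real i
       + ((2 * real n + 4 * real p + 6)/((real n + 2 * real p + 2)*y)) * (real i * Tr (2*p+4) (2*p+3-2*i))
       + (-1/y) * (real i * Tr (2*p+5) (2*p+3-2*i)))"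
      by (rule sum.cong[OF refl]) (rule hcomb)
    also have "\<dots> = ?R" by (rule lin5)
    finally show ?thesis .
  qed
  have gE: "g n p = (4 * real p ^ 2 + 6 * real p + 2) / (real n + 2 * real p + 2) + 4 * real p
     + (4 * real p ^ 2 + 4 * real n * real p + 4 * real n + 10 * real p + 6) * (2/x) + 1/y
     + ((1/(x*y)) * (\<Sum>i=1..p+1. real i * (2 * real ((n + 2*p + 4) choose (n + 2*i + 1))
           - real ((n + 2*p + 4) choose (n + 2*i + 2))
           - (2 * real n + 4 * real p + 6) * real ((2*p + 4) choose (2*i + 1))))
     + (4/x) * (\<Sum>i=1..p+1. real i * ((real n + 2 * real p + 1) / (real n + 2 * real p + 2) * (2*Tr m (n+2*i+2)/(4*y))
           - (2*Tr m (n+2*i+1)/(4*y) - 2/2^(2*i-1)) + (2*Tr (2*p+5) (2*i+2)/(4*y) - 2/2^(2*i-1))))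
     + (1/y) * (\<Sum>i=1..p+1. real i * ((2 * Tr (m+1) (2*p+3-2*i) / (2*x) - 2 * Tr (2*p+5) (2*p+3-2*i) / 2)
         - (2 * real n + 4 * real p + 6) / (real n + 2 * real p + 2) * (2 * Tr m (2*p+3-2*i) / (2*x) - 2 * Tr (2*p+4) (2*p+3-2*i) / 2))))"
    unfolding g_def P1 P2 P3 P4 sB[symmetric] sD[symmetric] by (simp only: add.assoc)
  have W: "(\<Sum>i=1..p+1. real i) = (real p + 1) * (real p + 2) / 2"
    unfolding shift1 using gauss_real[of p] by simp
  have XY: "X1 p = y * (real p+1) * (2*real p+5)" "X2 p = y * (real p+1) * (2*real p+1)"
     "Y1 p = y * (8*real p+4) + 1"
    using XY_closed[of p] unfolding y_def by auto
  have p16: "(2::real)^(2*p+4) = 16*y" and p32: "(2::real)^(2*p+4+1) = 32*y"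
    by (simp_all add: y_def power_add power_mult)
  show ?thesis unfolding gE sc
  proof (rule final_alg)
    show "x > 0" "y > 0" "real n \<ge> 0" "real p \<ge> 0" by (simp_all add: xpos ypos)
    show "X1 p = y * (real p+1) * (2*real p+5)" "X2 p = y * (real p+1) * (2*real p+1)"
     "Y1 p = y * (8*real p+4) + 1" by (rule XY)+
    show "(\<Sum>i=1..p+1. real i * real ((2*p + 4) choose (2*i + 1))) = X1 p - X2 p"
      by (rule S_closed(1))
    show "(\<Sum>i=1..p+1. real i * Tr (2*p+5) (2*i+2)) = X1 p + X2 p"
      by (rule S_closed(2))
    show "(\<Sum>i=1..p+1. real i) = (real p + 1) * (real p + 2) / 2" by (rule W)
    show "(\<Sum>i=1..p+1. real i * Tr (2*p+4) (2*p+3-2*i)) = 16 * y * (\<Sum>i=1..p+1. real i) - X2 p"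
      using S_closed(3)[of p] unfolding p16 W .
    show "(\<Sum>i=1..p+1. real i * Tr (2*p+5) (2*p+3-2*i)) = 32 * y * (\<Sum>i=1..p+1. real i) - (X1 p - Y1 p) - X2 p"
      using S_closed(4)[of p] unfolding p32 W .
  qed
qed

end
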